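(* The cut rule is admissible in ${\sf GWF_{N_2}}$: for every $D\in{\sf Frm_2}$ and all finite multisets $\Gamma,\Gamma',\Delta,\Delta'$ of ${\sf Frm_2}$-formulas, if $\Gamma\Rightarrow D,\Delta$ and $D,\Gamma'\Rightarrow\Delta'$ are derivable in ${\sf GWF_{N_2}}$, then $\Gamma,\Gamma'\Rightarrow\Delta,\Delta'$ is derivable in ${\sf GWF_{N_2}}$.
   Context: Language: countably many atoms $p,q,\dots$, the constant $\bot$, and binary connectives $\wedge,\vee,\rightarrow$ ($\rightarrow$ is strict implication). ${\sf Frm}$ is the set of formulas built from atoms and $\bot$ with $\wedge,\vee,\rightarrow$; $A,B,C,D$ range over ${\sf Frm}$. Let $\supset$ be a new binary symbol (material implication) and ${\sf Frm_1}={\sf Frm}\cup\{A\supset B : A,B\in{\sf Frm}\}$ (no nesting of $\supset$). ${\sf Frm_2}$ is the smallest set containing ${\sf Frm_1}$ and closed under $\wedge$ and $\vee$; $X,Y$ range over ${\sf Frm_2}$. A sequent is $\Gamma\Rightarrow\Delta$ with $\Gamma,\Delta$ finite multisets of ${\sf Frm_2}$-formulas. The calculus ${\sf GWF_{N_2}}$ has initial sequents $(id)$ $p,\Gamma\Rightarrow\Delta,p$ ($p$ an atom) and $(L_\bot)$ $\bot,\Gamma\Rightarrow\Delta$, and rules (premises / conclusion): $(L_\wedge)$ $X,Y,\Gamma\Rightarrow\Delta$ / $X\wedge Y,\Gamma\Rightarrow\Delta$; $(R_\wedge)$ $\Gamma\Rightarrow\Delta,X$ and $\Gamma\Rightarrow\Delta,Y$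 / $\Gamma\Rightarrow\Delta,X\wedge Y$; $(L_\vee)$ $X,\Gamma\Rightarrow\Delta$ and $Y,\Gamma\Rightarrow\Delta$ / $X\vee Y,\Gamma\Rightarrow\Delta$; $(R_\vee)$ $\Gamma\Rightarrow\Delta,X,Y$ / $\Gamma\Rightarrow\Delta,X\vee Y$; $(L_\supset)$ $\Gamma\Rightarrow\Delta,A$ and $B,\Gamma\Rightarrow\Delta$ / $A\supset B,\Gamma\Rightarrow\Delta$; $(R_\supset)$ $A,\Gamma\Rightarrow\Delta,B$ / $\Gamma\Rightarrow\Delta,A\supset B$; $(LR_\rightarrow)$ $C\supset D,A\Rightarrow B$ / $\Gamma,C\rightarrow D\Rightarrow\Delta,A\rightarrow B$; $(R_\rightarrow)$ $A\Rightarrow B$ / $\Gamma\Rightarrow\Delta,A\rightarrow B$. Here $A,B,C,D\in{\sf Frm}$, $X,Y\in{\sf Frm_2}$, and $\Gamma,\Delta$ are arbitrary finite multisets of ${\sf Frm_2}$-formulas. *)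

theory Defs
  imports Main "HOL-Library.Multiset"
begin

text \<open>Formulas. Imp is strict implication, MImp is material implication.\<close>
datatype fm = Atom nat | Bot | And fm fm | Or fm fm | Imp fm fm | MImp fm fm

fun is_frm :: "fm \<Rightarrow> bool" where
  "is_frm (Atom p) = True"
| "is_frm Bot = True"
| "is_frm (And A B) = (is_frm A \<and> is_frm B)"
| "is_frm (Or A B) = (is_frm A \<and> is_frm B)"
| "is_frm (Imp A B) = (is_frm A \<and> is_frm B)"
| "is_frm (MImp A B) = False"

definition is_frm1 :: "fm \<Rightarrow> bool" where
  "is_frm1 X \<longleftrightarrow> is_frm X \<or> (\<exists>A B. X = MImp A B \<and> is_frm A \<and> is_frm B)"

inductive is_frm2 :: "fm \<Rightarrow> bool" where
  base: "is_frm1 X \<Longrightarrow> is_frm2 X"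
| conj: "is_frm2 X \<Longrightarrow> is_frm2 Y \<Longrightarrow> is_frm2 (And X Y)"
| disj: "is_frm2 X \<Longrightarrow> is_frm2 Y \<Longrightarrow> is_frm2 (Or X Y)"

definition wf_ms :: "fm multiset \<Rightarrow> bool" where
  "wf_ms M \<longleftrightarrow> (\<forall>X\<in>#M. is_frm2 X)"

inductive deriv :: "fm multiset \<Rightarrow> fm multiset \<Rightarrow> bool" where
  id: "wf_ms \<Gamma> \<Longrightarrow> wf_ms \<Delta> \<Longrightarrow> deriv (add_mset (Atom p) \<Gamma>) (add_mset (Atom p) \<Delta>)"
| L_bot: "wf_ms \<Gamma> \<Longrightarrow> wf_ms \<Delta> \<Longrightarrow> deriv (add_mset Bot \<Gamma>) \<Delta>"
| L_and: "is_frm2 X \<Longrightarrow> is_frm2 Y \<Longrightarrow> deriv (add_mset X (add_mset Y \<Gamma>)) \<Delta>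
          \<Longrightarrow> deriv (add_mset (And X Y) \<Gamma>) \<Delta>"
| R_and: "is_frm2 X \<Longrightarrow> is_frm2 Y \<Longrightarrow> deriv \<Gamma> (add_mset X \<Delta>) \<Longrightarrow> deriv \<Gamma> (add_mset Y \<Delta>)
          \<Longrightarrow> deriv \<Gamma> (add_mset (And X Y) \<Delta>)"
| L_or: "is_frm2 X \<Longrightarrow> is_frm2 Y \<Longrightarrow> deriv (add_mset X \<Gamma>) \<Delta> \<Longrightarrow> deriv (add_mset Y \<Gamma>) \<Delta>
          \<Longrightarrow> deriv (add_mset (Or X Y) \<Gamma>) \<Delta>"
| R_or: "is_frm2 X \<Longrightarrow> is_frm2 Y \<Longrightarrow> deriv \<Gamma> (add_mset X (add_mset Y \<Delta>))
          \<Longrightarrow> deriv \<Gamma> (add_mset (Or X Y) \<Delta>)"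
| L_mimp: "is_frm A \<Longrightarrow> is_frm B \<Longrightarrow> deriv \<Gamma> (add_mset A \<Delta>) \<Longrightarrow> deriv (add_mset B \<Gamma>) \<Delta>
          \<Longrightarrow> deriv (add_mset (MImp A B) \<Gamma>) \<Delta>"
| R_mimp: "is_frm A \<Longrightarrow> is_frm B \<Longrightarrow> deriv (add_mset A \<Gamma>) (add_mset B \<Delta>)
          \<Longrightarrow> deriv \<Gamma> (add_mset (MImp A B) \<Delta>)"
| LR_imp: "is_frm A \<Longrightarrow> is_frm B \<Longrightarrow> is_frm C \<Longrightarrow> is_frm D \<Longrightarrow> wf_ms \<Gamma> \<Longrightarrow> wf_ms \<Delta>
          \<Longrightarrow> deriv {# MImp C D, A #} {# B #}
          \<Longrightarrow> deriv (add_mset (Imp C D) \<Gamma>) (add_mset (Imp A B) \<Delta>)"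
| R_imp: "is_frm A \<Longrightarrow> is_frm B \<Longrightarrow> wf_ms \<Gamma> \<Longrightarrow> wf_ms \<Delta>
          \<Longrightarrow> deriv {# A #} {# B #}
          \<Longrightarrow> deriv \<Gamma> (add_mset (Imp A B) \<Delta>)"

end

theory Submission imports Defs begin

lemma wf_add[simp]: "wf_ms (add_mset x M) \<longleftrightarrow> is_frm2 x \<and> wf_ms M"
  by (auto simp: wf_ms_def)
lemma wf_plus[simp]: "wf_ms (M + N) \<longleftrightarrow> wf_ms M \<and> wf_ms N"
  by (auto simp: wf_ms_def)
lemma wf_empty[simp]: "wf_ms {#}" by (simp add: wf_ms_def)
lemma frm_frm2: "is_frm A \<Longrightarrow> is_frm2 A"
  by (auto intro: is_frm2.base simp: is_frm1_def)
lemma mimp_frm2: "is_frm A \<Longrightarrow> is_frm B \<Longrightarrow> is_frm2 (MImp A B)"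
  by (auto intro: is_frm2.base simp: is_frm1_def)
lemma imp_frm2: "is_frm A \<Longrightarrow> is_frm B \<Longrightarrow> is_frm2 (Imp A B)"
  by (auto intro: frm_frm2)
lemma frm2_and: "is_frm2 (And X Y) \<Longrightarrow> is_frm2 X \<and> is_frm2 Y"
  by (erule is_frm2.cases) (auto simp: is_frm1_def intro: frm_frm2)
lemma frm2_or: "is_frm2 (Or X Y) \<Longrightarrow> is_frm2 X \<and> is_frm2 Y"
  by (erule is_frm2.cases) (auto simp: is_frm1_def intro: frm_frm2)
lemma frm2_mimp: "is_frm2 (MImp X Y) \<Longrightarrow> is_frm X \<and> is_frm Y"
  by (erule is_frm2.cases) (auto simp: is_frm1_def)
lemma frm2_imp: "is_frm2 (Imp X Y) \<Longrightarrow> is_frm X \<and> is_frm Y"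
  by (erule is_frm2.cases) (auto simp: is_frm1_def)

lemma atom_frm2[simp]: "is_frm2 (Atom p)" "is_frm2 Bot"
  by (auto intro: frm_frm2)

lemma deriv_wf: "deriv G D \<Longrightarrow> wf_ms G \<and> wf_ms D"
  by (induction rule: deriv.induct) (auto intro: frm_frm2 mimp_frm2 is_frm2.intros)

lemma weaken: "deriv G D \<Longrightarrow> wf_ms G2 \<Longrightarrow> wf_ms D2 \<Longrightarrow> deriv (G + G2) (D + D2)"
proof (induction arbitrary: G2 D2 rule: deriv.induct)
qed (auto intro: deriv.intros)



lemma LR_imp_m: "Imp C E \<in># G \<Longrightarrow> Imp A B \<in># D \<Longrightarrow> is_frm A \<Longrightarrow> is_frm B \<Longrightarrow> is_frm C \<Longrightarrow> is_frm E \<Longrightarrow> wf_ms G \<Longrightarrow> wf_ms D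
   \<Longrightarrow> deriv {# MImp C E, A #} {# B #} \<Longrightarrow> deriv G D"
  by (metis deriv.LR_imp insert_DiffM wf_add)
lemma R_imp_m: "Imp A B \<in># D \<Longrightarrow> is_frm A \<Longrightarrow> is_frm B \<Longrightarrow> wf_ms G \<Longrightarrow> wf_ms D
   \<Longrightarrow> deriv {# A #} {# B #} \<Longrightarrow> deriv G D"
  by (metis deriv.R_imp insert_DiffM wf_add)

lemma eq_split: "add_mset a M = add_mset b N \<Longrightarrow> a \<noteq> b \<Longrightarrow> \<exists>K. M = add_mset b K \<and> N = add_mset a K"
  by (auto simp: add_eq_conv_ex)

lemma id_m: "Atom p \<in># G \<Longrightarrow> Atom p \<in># D \<Longrightarrow> wf_ms G \<Longrightarrow> wf_ms D \<Longrightarrow> deriv G D"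
  by (metis deriv.id insert_DiffM wf_add)
lemma bot_m: "Bot \<in># G \<Longrightarrow> wf_ms G \<Longrightarrow> wf_ms D \<Longrightarrow> deriv G D"
  by (metis deriv.L_bot insert_DiffM wf_add)

definition compound :: "fm \<Rightarrow> bool" where
  "compound F \<longleftrightarrow> (\<exists>X Y. F = And X Y \<or> F = Or X Y \<or> F = MImp X Y)"

fun premL :: "fm \<Rightarrow> fm multiset \<Rightarrow> fm multiset \<Rightarrow> bool" where
  "premL (And X Y) G D = deriv (add_mset X (add_mset Y G)) D"
| "premL (Or X Y) G D = (deriv (add_mset X G) D \<and> deriv (add_mset Y G) D)"
| "premL (MImp A B) G D = (deriv G (add_mset A D) \<and> deriv (add_mset B G) D)"
| "premL _ G D = False"

lemma invL:
  assumes "deriv G D" "G = add_mset F G0" "compound F \<or> (\<exists>p. F = Atom p \<and> F \<in># G0)"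
    "wf_ms EL" "wf_ms ER"
    "\<And>G1 D1. premL F G1 D1 \<Longrightarrow> wf_ms G1 \<Longrightarrow> wf_ms D1 \<Longrightarrow> deriv (EL + G1) (ER + D1)"
  shows "deriv (EL + G0) (ER + D)"
  using assms
proof (induction arbitrary: G0 rule: deriv.induct)
  case (id \<Gamma> \<Delta> p)
  show ?case
  proof (cases "F = Atom p")
    case True with id show ?thesis by (auto simp: compound_def intro!: id_m)
  next
    case False then obtain K where "\<Gamma> = add_mset F K" "G0 = add_mset (Atom p) K"
      using eq_split[OF id.prems(1)[symmetric]] by metis
    with id show ?thesis by (auto intro!: id_m[of p])
  qed
next
  case (L_bot \<Gamma> \<Delta>)
  show ?case
  proof (cases "F = Bot")
    case True with L_bot show ?thesis by (auto simp: compound_def)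
  next
    case False then obtain K where "\<Gamma> = add_mset F K" "G0 = add_mset Bot K"
      using eq_split[OF L_bot.prems(1)[symmetric]] by metis
    with L_bot show ?thesis by (auto intro!: bot_m)
  qed
next
  case (L_and X Y \<Gamma> \<Delta>)
  show ?case
  proof (cases "F = And X Y")
    case True with L_and show ?thesis using deriv_wf[OF L_and.hyps(3)] by auto
  next
    case False then obtain K where K: "\<Gamma> = add_mset F K" "G0 = add_mset (And X Y) K"
      using eq_split[OF L_and.prems(1)[symmetric]] by metis
    have "deriv (EL + add_mset X (add_mset Y K)) (ER + \<Delta>)"
      apply (rule L_and.IH)
      using L_and.prems False K by (auto simp: add_mset_commute)
    then show ?thesis using K L_and.hyps by (simp add: deriv.L_and)
  qed
next
  case (R_and X Y \<Gamma> \<Delta>)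
  from R_and have "deriv (EL+G0) (ER + add_mset X \<Delta>)" "deriv (EL+G0) (ER + add_mset Y \<Delta>)" by blast+
  then show ?case using R_and.hyps by (simp add: deriv.R_and)
next
  case (L_or X Y \<Gamma> \<Delta>)
  show ?case
  proof (cases "F = Or X Y")
    case True with L_or show ?thesis using deriv_wf[OF L_or.hyps(3)] deriv_wf[OF L_or.hyps(4)] by auto
  next
    case False then obtain K where K: "\<Gamma> = add_mset F K" "G0 = add_mset (Or X Y) K"
      using eq_split[OF L_or.prems(1)[symmetric]] by metis
    have "deriv (EL + add_mset X K) (ER + \<Delta>)"
      apply (rule L_or.IH(1))
      using L_or.prems False K by (auto simp: add_mset_commute)
    moreover have "deriv (EL + add_mset Y K) (ER + \<Delta>)"
      apply (rule L_or.IH(2))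
      using L_or.prems False K by (auto simp: add_mset_commute)
    ultimately show ?thesis using K L_or.hyps by (simp add: deriv.L_or)
  qed
next
  case (R_or X Y \<Gamma> \<Delta>)
  from R_or have "deriv (EL+G0) (ER + add_mset X (add_mset Y \<Delta>))" by blast
  then show ?case using R_or.hyps by (simp add: deriv.R_or)
next
  case (L_mimp A B \<Gamma> \<Delta>)
  show ?case
  proof (cases "F = MImp A B")
    case True with L_mimp show ?thesis using deriv_wf[OF L_mimp.hyps(3)] deriv_wf[OF L_mimp.hyps(4)] by auto
  next
    case False then obtain K where K: "\<Gamma> = add_mset F K" "G0 = add_mset (MImp A B) K"
      using eq_split[OF L_mimp.prems(1)[symmetric]] by metis
    have "deriv (EL + K) (ER + add_mset A \<Delta>)"
      apply (rule L_mimp.IH(1))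
      using L_mimp.prems False K by (auto simp: add_mset_commute)
    moreover have "deriv (EL + add_mset B K) (ER + \<Delta>)"
      apply (rule L_mimp.IH(2))
      using L_mimp.prems False K by (auto simp: add_mset_commute)
    ultimately show ?thesis using K L_mimp.hyps by (simp add: deriv.L_mimp)
  qed
next
  case (R_mimp A B \<Gamma> \<Delta>)
  have "deriv (EL + add_mset A G0) (ER + add_mset B \<Delta>)"
    apply (rule R_mimp.IH)
    using R_mimp.prems by (auto simp: add_mset_commute)
  then show ?case using R_mimp.hyps by (simp add: deriv.R_mimp)
next
  case (LR_imp A B C D \<Gamma> \<Delta>)
  have "F \<noteq> Imp C D" using LR_imp.prems(2) by (auto simp: compound_def)
  then obtain K where K: "\<Gamma> = add_mset F K" "G0 = add_mset (Imp C D) K"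
      using eq_split[OF LR_imp.prems(1)[symmetric]] by metis
  then show ?case using LR_imp by (simp add: deriv.LR_imp)
next
  case (R_imp A B \<Gamma> \<Delta>)
  then show ?case by (simp add: deriv.R_imp)
qed

fun premR :: "fm \<Rightarrow> fm multiset \<Rightarrow> fm multiset \<Rightarrow> bool" where
  "premR (And X Y) G D = (deriv G (add_mset X D) \<and> deriv G (add_mset Y D))"
| "premR (Or X Y) G D = deriv G (add_mset X (add_mset Y D))"
| "premR (MImp A B) G D = deriv (add_mset A G) (add_mset B D)"
| "premR _ G D = False"

lemma invR:
  assumes "deriv G D" "D = add_mset F D0" "compound F"
    "wf_ms EL" "wf_ms ER"
    "\<And>G1 D1. premR F G1 D1 \<Longrightarrow> wf_ms G1 \<Longrightarrow> wf_ms D1 \<Longrightarrow> deriv (EL + G1) (ER + D1)"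
  shows "deriv (EL + G) (ER + D0)"
  using assms
proof (induction arbitrary: D0 rule: deriv.induct)
  case (id \<Gamma> \<Delta> p)
  have "F \<noteq> Atom p" using id by (auto simp: compound_def)
  then obtain K where "\<Delta> = add_mset F K" "D0 = add_mset (Atom p) K"
    using eq_split[OF id.prems(1)[symmetric]] by metis
  with id show ?case by (auto intro!: id_m[of p])
next
  case (L_bot \<Gamma> \<Delta>)
  then show ?case by (auto intro!: bot_m)
next
  case (L_and X Y \<Gamma> \<Delta>)
  from L_and have "deriv (EL + add_mset X (add_mset Y \<Gamma>)) (ER + D0)" by blast
  then show ?case using L_and.hyps by (simp add: deriv.L_and)
next
  case (R_and X Y \<Gamma> \<Delta>)
  show ?case
  proof (cases "F = And X Y")
    case True with R_and show ?thesis using deriv_wf[OF R_and.hyps(3)] deriv_wf[OF R_and.hyps(4)] by auto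
  next
    case False then obtain K where K: "\<Delta> = add_mset F K" "D0 = add_mset (And X Y) K"
      using eq_split[OF R_and.prems(1)[symmetric]] by metis
    have "deriv (EL + \<Gamma>) (ER + add_mset X K)"
      apply (rule R_and.IH(1))
      using R_and.prems False K by (auto simp: add_mset_commute)
    moreover have "deriv (EL + \<Gamma>) (ER + add_mset Y K)"
      apply (rule R_and.IH(2))
      using R_and.prems False K by (auto simp: add_mset_commute)
    ultimately show ?thesis using K R_and.hyps by (simp add: deriv.R_and)
  qed
next
  case (L_or X Y \<Gamma> \<Delta>)
  from L_or have "deriv (EL + add_mset X \<Gamma>) (ER + D0)" "deriv (EL + add_mset Y \<Gamma>) (ER + D0)" by blast+
  then show ?case using L_or.hyps by (simp add: deriv.L_or)
next
  case (R_or X Y \<Gamma> \<Delta>)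
  show ?case
  proof (cases "F = Or X Y")
    case True with R_or show ?thesis using deriv_wf[OF R_or.hyps(3)] by auto
  next
    case False then obtain K where K: "\<Delta> = add_mset F K" "D0 = add_mset (Or X Y) K"
      using eq_split[OF R_or.prems(1)[symmetric]] by metis
    have "deriv (EL + \<Gamma>) (ER + add_mset X (add_mset Y K))"
      apply (rule R_or.IH)
      using R_or.prems False K by (auto simp: add_mset_commute)
    then show ?thesis using K R_or.hyps by (simp add: deriv.R_or)
  qed
next
  case (L_mimp A B \<Gamma> \<Delta>)
  have "deriv (EL + \<Gamma>) (ER + add_mset A D0)"
    apply (rule L_mimp.IH(1))
    using L_mimp.prems by (auto simp: add_mset_commute)
  moreover from L_mimp have "deriv (EL + add_mset B \<Gamma>) (ER + D0)" by blast
  ultimately show ?case using L_mimp.hyps by (simp add: deriv.L_mimp)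
next
  case (R_mimp A B \<Gamma> \<Delta>)
  show ?case
  proof (cases "F = MImp A B")
    case True with R_mimp show ?thesis using deriv_wf[OF R_mimp.hyps(3)] by auto
  next
    case False then obtain K where K: "\<Delta> = add_mset F K" "D0 = add_mset (MImp A B) K"
      using eq_split[OF R_mimp.prems(1)[symmetric]] by metis
    have "deriv (EL + add_mset A \<Gamma>) (ER + add_mset B K)"
      apply (rule R_mimp.IH)
      using R_mimp.prems False K by (auto simp: add_mset_commute)
    then show ?thesis using K R_mimp.hyps by (simp add: deriv.R_mimp)
  qed
next
  case (LR_imp A B C D \<Gamma> \<Delta>)
  have "F \<noteq> Imp A B" using LR_imp.prems(2) by (auto simp: compound_def)
  then obtain K where K: "\<Delta> = add_mset F K" "D0 = add_mset (Imp A B) K"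
      using eq_split[OF LR_imp.prems(1)[symmetric]] by metis
  then show ?case using LR_imp by (simp add: deriv.LR_imp)
next
  case (R_imp A B \<Gamma> \<Delta>)
  have "F \<noteq> Imp A B" using R_imp.prems(2) by (auto simp: compound_def)
  then obtain K where K: "\<Delta> = add_mset F K" "D0 = add_mset (Imp A B) K"
      using eq_split[OF R_imp.prems(1)[symmetric]] by metis
  then show ?case using R_imp by (simp add: deriv.R_imp)
qed

lemma inv_L_and: "deriv (add_mset (And X Y) G) D \<Longrightarrow> deriv (add_mset X (add_mset Y G)) D"
  using invL[of "add_mset (And X Y) G" D "And X Y" G "{#X,Y#}" "{#}"] deriv_wf[of "add_mset (And X Y) G" D]
  by (auto simp: compound_def dest: frm2_and)
lemma inv_L_or1: "deriv (add_mset (Or X Y) G) D \<Longrightarrow> deriv (add_mset X G) D"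
  using invL[of "add_mset (Or X Y) G" D "Or X Y" G "{#X#}" "{#}"] deriv_wf[of "add_mset (Or X Y) G" D]
  by (auto simp: compound_def dest: frm2_or)
lemma inv_L_or2: "deriv (add_mset (Or X Y) G) D \<Longrightarrow> deriv (add_mset Y G) D"
  using invL[of "add_mset (Or X Y) G" D "Or X Y" G "{#Y#}" "{#}"] deriv_wf[of "add_mset (Or X Y) G" D]
  by (auto simp: compound_def dest: frm2_or)
lemma inv_L_mimp1: "deriv (add_mset (MImp A B) G) D \<Longrightarrow> deriv G (add_mset A D)"
  using invL[of "add_mset (MImp A B) G" D "MImp A B" G "{#}" "{#A#}"] deriv_wf[of "add_mset (MImp A B) G" D]
  by (auto simp: compound_def dest: frm2_mimp intro: frm_frm2)
lemma inv_L_mimp2: "deriv (add_mset (MImp A B) G) D \<Longrightarrow> deriv (add_mset B G) D"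
  using invL[of "add_mset (MImp A B) G" D "MImp A B" G "{#B#}" "{#}"] deriv_wf[of "add_mset (MImp A B) G" D]
  by (auto simp: compound_def dest: frm2_mimp intro: frm_frm2)
lemma contr_atom: "deriv (add_mset (Atom p) (add_mset (Atom p) G)) D \<Longrightarrow> deriv (add_mset (Atom p) G) D"
  using invL[of "add_mset (Atom p) (add_mset (Atom p) G)" D "Atom p" "add_mset (Atom p) G" "{#}" "{#}"]
  by auto

lemma inv_R_and1: "deriv G (add_mset (And X Y) D) \<Longrightarrow> deriv G (add_mset X D)"
  using invR[of G "add_mset (And X Y) D" "And X Y" D "{#}" "{#X#}"] deriv_wf[of G "add_mset (And X Y) D"]
  by (auto simp: compound_def dest: frm2_and)
lemma inv_R_and2: "deriv G (add_mset (And X Y) D) \<Longrightarrow> deriv G (add_mset Y D)"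
  using invR[of G "add_mset (And X Y) D" "And X Y" D "{#}" "{#Y#}"] deriv_wf[of G "add_mset (And X Y) D"]
  by (auto simp: compound_def dest: frm2_and)
lemma inv_R_or: "deriv G (add_mset (Or X Y) D) \<Longrightarrow> deriv G (add_mset X (add_mset Y D))"
  using invR[of G "add_mset (Or X Y) D" "Or X Y" D "{#}" "{#X,Y#}"] deriv_wf[of G "add_mset (Or X Y) D"]
  by (auto simp: compound_def dest: frm2_or)
lemma inv_R_mimp: "deriv G (add_mset (MImp A B) D) \<Longrightarrow> deriv (add_mset A G) (add_mset B D)"
  using invR[of G "add_mset (MImp A B) D" "MImp A B" D "{#A#}" "{#B#}"] deriv_wf[of G "add_mset (MImp A B) D"]
  by (auto simp: compound_def dest: frm2_mimp intro: frm_frm2)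

lemma impL:
  assumes "deriv G D" "G = add_mset (Imp A B) G0" "S \<subseteq> set_mset G0" "\<forall>x\<in>S. \<exists>C E. x = Imp C E"
   "\<And>A' B' G1 D1. wf_ms G1 \<Longrightarrow> wf_ms D1 \<Longrightarrow> is_frm A' \<Longrightarrow> is_frm B' \<Longrightarrow> deriv {#MImp A B, A'#} {#B'#}
       \<Longrightarrow> S \<subseteq> set_mset G1 \<Longrightarrow> deriv G1 (add_mset (Imp A' B') D1)"
  shows "deriv G0 D"
  using assms
proof (induction arbitrary: G0 rule: deriv.induct)
  case (id \<Gamma> \<Delta> p)
  obtain K where "\<Gamma> = add_mset (Imp A B) K" "G0 = add_mset (Atom p) K"
    using eq_split[OF id.prems(1)[symmetric]] by auto
  with id show ?case by (auto intro!: id_m[of p])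
next
  case (L_bot \<Gamma> \<Delta>)
  obtain K where "\<Gamma> = add_mset (Imp A B) K" "G0 = add_mset Bot K"
    using eq_split[OF L_bot.prems(1)[symmetric]] by auto
  with L_bot show ?case by (auto intro!: bot_m)
next
  case (L_and X Y \<Gamma> \<Delta>)
  obtain K where K: "\<Gamma> = add_mset (Imp A B) K" "G0 = add_mset (And X Y) K"
    using eq_split[OF L_and.prems(1)[symmetric]] by auto
  have "deriv (add_mset X (add_mset Y K)) \<Delta>"
    apply (rule L_and.IH)
    using L_and.prems K by (auto simp: add_mset_commute)
  then show ?case using K L_and.hyps by (simp add: deriv.L_and)
next
  case (R_and X Y \<Gamma> \<Delta>)
  from R_and have "deriv G0 (add_mset X \<Delta>)" "deriv G0 (add_mset Y \<Delta>)" by blast+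
  then show ?case using R_and.hyps by (simp add: deriv.R_and)
next
  case (L_or X Y \<Gamma> \<Delta>)
  obtain K where K: "\<Gamma> = add_mset (Imp A B) K" "G0 = add_mset (Or X Y) K"
    using eq_split[OF L_or.prems(1)[symmetric]] by auto
  have "deriv (add_mset X K) \<Delta>"
    apply (rule L_or.IH(1))
    using L_or.prems K by (auto simp: add_mset_commute)
  moreover have "deriv (add_mset Y K) \<Delta>"
    apply (rule L_or.IH(2))
    using L_or.prems K by (auto simp: add_mset_commute)
  ultimately show ?case using K L_or.hyps by (simp add: deriv.L_or)
next
  case (R_or X Y \<Gamma> \<Delta>)
  from R_or have "deriv G0 (add_mset X (add_mset Y \<Delta>))" by blast
  then show ?case using R_or.hyps by (simp add: deriv.R_or)
next
  case (L_mimp A1 B1 \<Gamma> \<Delta>)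
  obtain K where K: "\<Gamma> = add_mset (Imp A B) K" "G0 = add_mset (MImp A1 B1) K"
    using eq_split[OF L_mimp.prems(1)[symmetric]] by auto
  have "deriv K (add_mset A1 \<Delta>)"
    apply (rule L_mimp.IH(1))
    using L_mimp.prems K by (auto simp: add_mset_commute)
  moreover have "deriv (add_mset B1 K) \<Delta>"
    apply (rule L_mimp.IH(2))
    using L_mimp.prems K by (auto simp: add_mset_commute)
  ultimately show ?case using K L_mimp.hyps by (simp add: deriv.L_mimp)
next
  case (R_mimp A1 B1 \<Gamma> \<Delta>)
  have "deriv (add_mset A1 G0) (add_mset B1 \<Delta>)"
    apply (rule R_mimp.IH)
    using R_mimp.prems by (auto simp: add_mset_commute)
  then show ?case using R_mimp.hyps by (simp add: deriv.R_mimp)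
next
  case (LR_imp A1 B1 C E \<Gamma> \<Delta>)
  show ?case
  proof (cases "Imp C E = Imp A B")
    case True
    then have "\<Gamma> = G0" using LR_imp.prems(1) by simp
    then show ?thesis using LR_imp True by auto
  next
    case False
    then obtain K where K: "\<Gamma> = add_mset (Imp A B) K" "G0 = add_mset (Imp C E) K"
      using eq_split[OF LR_imp.prems(1)[symmetric]] by metis
    then show ?thesis using LR_imp by (simp add: deriv.LR_imp)
  qed
next
  case (R_imp A1 B1 \<Gamma> \<Delta>)
  then show ?case by (simp add: deriv.R_imp)
qed

fun wt :: "fm \<Rightarrow> nat" where
  "wt (Atom p) = 1"
| "wt Bot = 1"
| "wt (And A B) = wt A + wt B + 1"
| "wt (Or A B) = wt A + wt B + 1"
| "wt (MImp A B) = wt A + wt B + 1"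
| "wt (Imp A B) = wt A + wt B + 2"

lemma cut_nc:
  assumes "deriv Gl Dl" "Dl = add_mset F D0" "deriv (add_mset F Gl) D0" "\<not> compound F"
   and cutH: "\<And>F' G D. wt F' < wt F \<Longrightarrow> is_frm2 F' \<Longrightarrow> deriv G (add_mset F' D) \<Longrightarrow> deriv (add_mset F' G) D \<Longrightarrow> deriv G D"
  shows "deriv Gl D0"
  using assms(1-4)
proof (induction arbitrary: D0 rule: deriv.induct)
  case (id \<Gamma> \<Delta> p)
  show ?case
  proof (cases "F = Atom p")
    case True
    then have "\<Delta> = D0" using id.prems(1) by simp
    with True id.prems(2) show ?thesis by (simp add: contr_atom)
  next
    case False
    then obtain K where "\<Delta> = add_mset F K" "D0 = add_mset (Atom p) K"
      using eq_split[OF id.prems(1)[symmetric]] by metis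
    with id show ?thesis by (auto intro!: id_m[of p])
  qed
next
  case (L_bot \<Gamma> \<Delta>)
  then show ?case using deriv_wf[OF L_bot.prems(2)] by (auto intro!: bot_m)
next
  case (L_and X Y \<Gamma> \<Delta>)
  have "deriv (add_mset (And X Y) (add_mset F \<Gamma>)) D0" using L_and.prems(2) by (simp add: add_mset_commute)
  then have "deriv (add_mset X (add_mset Y (add_mset F \<Gamma>))) D0" by (rule inv_L_and)
  then have "deriv (add_mset F (add_mset X (add_mset Y \<Gamma>))) D0" by (simp add: add_mset_commute)
  then have "deriv (add_mset X (add_mset Y \<Gamma>)) D0" using L_and.IH[OF L_and.prems(1) _ L_and.prems(3)] by blast
  then show ?case using L_and.hyps by (simp add: deriv.L_and)
next
  case (R_and X Y \<Gamma> \<Delta>)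
  have "F \<noteq> And X Y" using R_and.prems(3) by (auto simp: compound_def)
  then obtain K where K: "\<Delta> = add_mset F K" "D0 = add_mset (And X Y) K"
    using eq_split[OF R_and.prems(1)[symmetric]] by metis
  have "deriv \<Gamma> (add_mset X K)"
    apply (rule R_and.IH(1))
    using K apply (simp add: add_mset_commute)
    using R_and.prems(2) K inv_R_and1 apply auto[1]
    by (fact R_and.prems(3))
  moreover have "deriv \<Gamma> (add_mset Y K)"
    apply (rule R_and.IH(2))
    using K apply (simp add: add_mset_commute)
    using R_and.prems(2) K inv_R_and2 apply auto[1]
    by (fact R_and.prems(3))
  ultimately show ?case using K R_and.hyps by (simp add: deriv.R_and)
next
  case (L_or X Y \<Gamma> \<Delta>)
  have "deriv (add_mset (Or X Y) (add_mset F \<Gamma>)) D0" using L_or.prems(2) by (simp add: add_mset_commute)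
  then have "deriv (add_mset X (add_mset F \<Gamma>)) D0" "deriv (add_mset Y (add_mset F \<Gamma>)) D0"
    by (rule inv_L_or1, rule inv_L_or2)
  then have "deriv (add_mset F (add_mset X \<Gamma>)) D0" "deriv (add_mset F (add_mset Y \<Gamma>)) D0"
    by (simp_all add: add_mset_commute)
  then have "deriv (add_mset X \<Gamma>) D0" "deriv (add_mset Y \<Gamma>) D0" using L_or.IH(1)[OF L_or.prems(1) _ L_or.prems(3)] L_or.IH(2)[OF L_or.prems(1) _ L_or.prems(3)] by blast+
  then show ?case using L_or.hyps by (simp add: deriv.L_or)
next
  case (R_or X Y \<Gamma> \<Delta>)
  have "F \<noteq> Or X Y" using R_or.prems(3) by (auto simp: compound_def)
  then obtain K where K: "\<Delta> = add_mset F K" "D0 = add_mset (Or X Y) K"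
    using eq_split[OF R_or.prems(1)[symmetric]] by metis
  have "deriv \<Gamma> (add_mset X (add_mset Y K))"
    apply (rule R_or.IH)
    using K apply (simp add: add_mset_commute)
    using R_or.prems(2) K inv_R_or apply auto[1]
    by (fact R_or.prems(3))
  then show ?case using K R_or.hyps by (simp add: deriv.R_or)
next
  case (L_mimp A B \<Gamma> \<Delta>)
  have "deriv (add_mset (MImp A B) (add_mset F \<Gamma>)) D0" using L_mimp.prems(2) by (simp add: add_mset_commute)
  then have 1: "deriv (add_mset F \<Gamma>) (add_mset A D0)" and "deriv (add_mset B (add_mset F \<Gamma>)) D0"
    by (rule inv_L_mimp1, rule inv_L_mimp2)
  then have 2: "deriv (add_mset F (add_mset B \<Gamma>)) D0" by (simp add: add_mset_commute)
  have "deriv \<Gamma> (add_mset A D0)"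
    apply (rule L_mimp.IH(1))
    using L_mimp.prems(1) apply (simp add: add_mset_commute)
    apply (fact 1)
    by (fact L_mimp.prems(3))
  moreover have "deriv (add_mset B \<Gamma>) D0" using L_mimp.IH(2)[OF L_mimp.prems(1) 2 L_mimp.prems(3)] .
  ultimately show ?case using L_mimp.hyps by (simp add: deriv.L_mimp)
next
  case (R_mimp A B \<Gamma> \<Delta>)
  have "F \<noteq> MImp A B" using R_mimp.prems(3) by (auto simp: compound_def)
  then obtain K where K: "\<Delta> = add_mset F K" "D0 = add_mset (MImp A B) K"
    using eq_split[OF R_mimp.prems(1)[symmetric]] by metis
  have "deriv (add_mset A (add_mset F \<Gamma>)) (add_mset B K)"
    using R_mimp.prems(2) K inv_R_mimp by auto
  then have h: "deriv (add_mset F (add_mset A \<Gamma>)) (add_mset B K)" by (simp add: add_mset_commute)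
  have "deriv (add_mset A \<Gamma>) (add_mset B K)"
    apply (rule R_mimp.IH)
    using K apply (simp add: add_mset_commute)
    apply (fact h)
    by (fact R_mimp.prems(3))
  then show ?case using K R_mimp.hyps by (simp add: deriv.R_mimp)
next
  case (LR_imp A B C E \<Gamma> \<Delta>)
  show ?case
  proof (cases "F = Imp A B")
    case True
    then have D: "\<Delta> = D0" using LR_imp.prems(1) by simp
    have cmimp: "deriv {#MImp C E#} {#MImp A B#}"
      using deriv.R_mimp[of A B "{#MImp C E#}" "{#}"] LR_imp.hyps by (simp add: add_mset_commute)
    show ?thesis
    proof (rule impL[of "add_mset (Imp A B) (add_mset (Imp C E) \<Gamma>)" D0 A B _ "{Imp C E}"])
      show "deriv (add_mset (Imp A B) (add_mset (Imp C E) \<Gamma>)) D0" using LR_imp.prems(2) True by simp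
    next
      fix A' B' G1 D1
      assume a: "wf_ms G1" "wf_ms D1" "is_frm A'" "is_frm B'" "deriv {#MImp A B, A'#} {#B'#}"
        "{Imp C E} \<subseteq> set_mset G1"
      have w1: "deriv ({#MImp C E#} + {#A'#}) ({#MImp A B#} + {#B'#})"
        by (rule weaken[OF cmimp]) (use a frm_frm2 in auto)
      have w2: "deriv ({#MImp A B, A'#} + {#MImp C E#}) ({#B'#} + {#})"
        by (rule weaken[OF a(5)]) (use LR_imp.hyps mimp_frm2 in auto)
      have eq1: "{#MImp C E#} + {#A'#} = {#MImp C E, A'#}" "{#MImp A B#} + {#B'#} = {#MImp A B, B'#}"
        by (simp_all add: add_mset_commute)
      have w1': "deriv {#MImp C E, A'#} {#MImp A B, B'#}" using w1 unfolding eq1 .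
      have eq2: "{#MImp A B, A'#} + {#MImp C E#} = {#MImp A B, MImp C E, A'#}" by (simp add: add_mset_commute)
      have w2': "deriv {#MImp A B, MImp C E, A'#} {#B'#}" using w2 unfolding eq2 by simp
      have "deriv {#MImp C E, A'#} {#B'#}"
        apply (rule cutH[of "MImp A B" "{#MImp C E, A'#}" "{#B'#}"])
        using True apply simp
        using LR_imp.hyps apply (simp add: mimp_frm2)
        apply (rule w1')
        by (rule w2')

      then show "deriv G1 (add_mset (Imp A' B') D1)"
        using a LR_imp.hyps by (auto intro!: LR_imp_m[of C E _ A' B'] imp_frm2)
    qed (use LR_imp.hyps in auto)
  next
    case False
    then obtain K where K: "\<Delta> = add_mset F K" "D0 = add_mset (Imp A B) K"
      using eq_split[OF LR_imp.prems(1)[symmetric]] by metis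
    then show ?thesis using LR_imp by (simp add: deriv.LR_imp)
  qed
next
  case (R_imp A B \<Gamma> \<Delta>)
  show ?case
  proof (cases "F = Imp A B")
    case True
    then have D: "\<Delta> = D0" using R_imp.prems(1) by simp
    have cmimp: "deriv {#} {#MImp A B#}"
      using deriv.R_mimp[of A B "{#}" "{#}"] R_imp.hyps by simp
    show ?thesis
    proof (rule impL[of "add_mset (Imp A B) \<Gamma>" D0 A B _ "{}"])
      show "deriv (add_mset (Imp A B) \<Gamma>) D0" using R_imp.prems(2) True by simp
    next
      fix A' B' G1 D1
      assume a: "wf_ms G1" "wf_ms D1" "is_frm A'" "is_frm B'" "deriv {#MImp A B, A'#} {#B'#}"
      have w1: "deriv ({#} + {#A'#}) ({#MImp A B#} + {#B'#})"
        by (rule weaken[OF cmimp]) (use a frm_frm2 in auto)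
      have eq1: "{#} + {#A'#} = {#A'#}" "{#MImp A B#} + {#B'#} = {#MImp A B, B'#}"
        by (simp_all add: add_mset_commute)
      have w1': "deriv {#A'#} {#MImp A B, B'#}" using w1 unfolding eq1 .
      have "deriv {#A'#} {#B'#}"
        apply (rule cutH[of "MImp A B" "{#A'#}" "{#B'#}"])
        using True apply simp
        using R_imp.hyps apply (simp add: mimp_frm2)
        apply (rule w1')
        by (rule a(5))
      then show "deriv G1 (add_mset (Imp A' B') D1)"
        using a R_imp.hyps by (auto intro!: R_imp_m[of A' B'] imp_frm2)
    qed (use R_imp.hyps in auto)
  next
    case False
    then obtain K where K: "\<Delta> = add_mset F K" "D0 = add_mset (Imp A B) K"
      using eq_split[OF R_imp.prems(1)[symmetric]] by metis
    then show ?thesis using R_imp by (simp add: deriv.R_imp)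
  qed
qed

lemma weakL1: "deriv G D \<Longrightarrow> is_frm2 x \<Longrightarrow> deriv (add_mset x G) D"
  using weaken[of G D "{#x#}" "{#}"] by simp
lemma weakR1: "deriv G D \<Longrightarrow> is_frm2 x \<Longrightarrow> deriv G (add_mset x D)"
  using weaken[of G D "{#}" "{#x#}"] by simp

lemma cut_add: "is_frm2 F \<Longrightarrow> deriv G (add_mset F D) \<Longrightarrow> deriv (add_mset F G) D \<Longrightarrow> deriv G D"
proof (induction "wt F" arbitrary: F G D rule: less_induct)
  case less
  show ?case
  proof (cases "compound F")
    case False
    show ?thesis
      apply (rule cut_nc[OF less.prems(2) refl less.prems(3) False])
      apply (rule less.hyps)
      by assumption+
  next
    case True
    then obtain X Y where "F = And X Y \<or> F = Or X Y \<or> F = MImp X Y" by (auto simp: compound_def)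
    then consider (a) "F = And X Y" | (o) "F = Or X Y" | (m) "F = MImp X Y" by blast
    then show ?thesis
    proof cases
      case a
      have f: "is_frm2 X" "is_frm2 Y" using frm2_and[OF less.prems(1)[unfolded a]] by auto
      have h1: "deriv G (add_mset X D)" using inv_R_and1[OF less.prems(2)[unfolded a]] .
      have h2: "deriv G (add_mset Y D)" using inv_R_and2[OF less.prems(2)[unfolded a]] .
      have h3: "deriv (add_mset X (add_mset Y G)) D" using inv_L_and[OF less.prems(3)[unfolded a]] .
      have h1w: "deriv (add_mset Y G) (add_mset X D)" using weakL1[OF h1 f(2)] .
      have s1: "deriv (add_mset Y G) D"
        using less.hyps[of X, OF _ f(1) h1w h3] a by simp
      show ?thesis using less.hyps[of Y, OF _ f(2) h2 s1] a by simp
    next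
      case o
      have f: "is_frm2 X" "is_frm2 Y" using frm2_or[OF less.prems(1)[unfolded o]] by auto
      have h1: "deriv G (add_mset X (add_mset Y D))" using inv_R_or[OF less.prems(2)[unfolded o]] .
      have h2: "deriv (add_mset X G) D" using inv_L_or1[OF less.prems(3)[unfolded o]] .
      have h3: "deriv (add_mset Y G) D" using inv_L_or2[OF less.prems(3)[unfolded o]] .
      have h2w: "deriv (add_mset X G) (add_mset Y D)" using weakR1[OF h2 f(2)] .
      have s1: "deriv G (add_mset Y D)"
        using less.hyps[of X, OF _ f(1) h1 h2w] o by simp
      show ?thesis using less.hyps[of Y, OF _ f(2) s1 h3] o by simp
    next
      case m
      have f: "is_frm2 X" "is_frm2 Y" using frm2_mimp[OF less.prems(1)[unfolded m]] frm_frm2 by auto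
      have h1: "deriv (add_mset X G) (add_mset Y D)" using inv_R_mimp[OF less.prems(2)[unfolded m]] .
      have h2: "deriv G (add_mset X D)" using inv_L_mimp1[OF less.prems(3)[unfolded m]] .
      have h3: "deriv (add_mset Y G) D" using inv_L_mimp2[OF less.prems(3)[unfolded m]] .
      have h2w: "deriv G (add_mset X (add_mset Y D))"
        using weakR1[OF h2 f(2)] unfolding add_mset_commute[of Y X D] .
      have s1: "deriv G (add_mset Y D)"
        using less.hyps[of X, OF _ f(1) h2w h1] m by simp
      show ?thesis using less.hyps[of Y, OF _ f(2) s1 h3] m by simp
    qed
  qed
qed

theorem theorem3p6:
  assumes "is_frm2 D"
    and "wf_ms \<Gamma>" and "wf_ms \<Gamma>'" and "wf_ms \<Delta>" and "wf_ms \<Delta>'"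
    and "deriv \<Gamma> (add_mset D \<Delta>)"
    and "deriv (add_mset D \<Gamma>') \<Delta>'"
  shows "deriv (\<Gamma> + \<Gamma>') (\<Delta> + \<Delta>')"
proof -
  have 1: "deriv (\<Gamma> + \<Gamma>') (add_mset D (\<Delta> + \<Delta>'))" using weaken[OF assms(6) assms(3) assms(5)] by simp
  have 2: "deriv (add_mset D (\<Gamma> + \<Gamma>')) (\<Delta> + \<Delta>')" using weaken[OF assms(7) assms(2) assms(4)]
    by (simp add: add.commute[of "\<Gamma>'" \<Gamma>] add.commute[of "\<Delta>'" \<Delta>])
  show ?thesis by (rule cut_add[OF assms(1) 1 2])
qed
end
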